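(* Let $p\geq2$ and $q\in\,]1,2]$ with $\frac1p+\frac1q=1$. Let $\mathcal{C}\subset\mathbb{R}^m$ be a centrally symmetric compact convex set with nonempty interior which is $(\alpha,p)$-uniformly convex for some $\alpha>0$, i.e. $\delta_{\|\cdot\|_{\mathcal{C}}}(\epsilon)\geq\alpha\epsilon^p$ for all $\epsilon\in[0,2]$. Let $\mathcal{X}\subset\mathbb{R}^m$ with $D=\sup_{x\in\mathcal{X}}\|x\|_{\mathcal{C}^\circ}<\infty$, and consider the class $\mathcal{F}_{\mathcal{C}}=\{x\in\mathcal{X}\mapsto\langle x,w\rangle:\|w\|_{\mathcal{C}}\leq1\}$. Then there exists $C>0$, depending only on $p$ and $\alpha$, such that for every $n\geq1$ and every distribution $\mu$ on $\mathcal{X}$, $R_n(\mathcal{F}_{\mathcal{C}})\leq\frac{C^{1/q}D}{n^{1/p}}$.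
   Context: $\|x\|_{\mathcal{C}}=\inf\{\lambda\geq0:x\in\lambda\mathcal{C}\}$ is the gauge (a norm), $\mathcal{C}^\circ=\{d:\langle x,d\rangle\leq1\ \forall x\in\mathcal{C}\}$ the polar and $\|\cdot\|_{\mathcal{C}^\circ}$ the dual norm of $\|\cdot\|_{\mathcal{C}}$. The modulus of convexity is $\delta_{\|\cdot\|_{\mathcal{C}}}(\epsilon)=\inf\{1-\|(x+y)/2\|_{\mathcal{C}}:\|x\|_{\mathcal{C}}=\|y\|_{\mathcal{C}}=1,\|x-y\|_{\mathcal{C}}\geq\epsilon\}$. For a class $\mathcal{F}$ of functions $\mathcal{X}\to\mathbb{R}$, the Rademacher constant is $R_n(\mathcal{F})=\mathbb{E}_{(\epsilon_i),(x_i)}\big[\sup_{f\in\mathcal{F}}\big|\frac1n\sum_{i=1}^nf(x_i)\epsilon_i\big|\big]$, where $x_1,\dots,x_n$ are i.i.d. from $\mu$ and $\epsilon_1,\dots,\epsilon_n$ are i.i.d. uniform on $\{-1,+1\}$, independent of the $x_i$. *)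

theory Defs
  imports "HOL-Analysis.Analysis" "HOL-Probability.Probability"
begin

text \<open>R^m is represented as the set of real sequences vanishing from index m on,
  so that the dimension m can be quantified inside the formula.  The topology is
  the product topology on nat => real, which restricts to the Euclidean one on vec m.\<close>

definition vec :: "nat \<Rightarrow> (nat \<Rightarrow> real) set" where
  "vec m = {x. \<forall>i. m \<le> i \<longrightarrow> x i = 0}"

definition ip :: "nat \<Rightarrow> (nat \<Rightarrow> real) \<Rightarrow> (nat \<Rightarrow> real) \<Rightarrow> real" where
  "ip m x y = (\<Sum>i<m. x i * y i)"

definition vscale :: "real \<Rightarrow> (nat \<Rightarrow> real) \<Rightarrow> (nat \<Rightarrow> real)" where
  "vscale t x = (\<lambda>i. t * x i)"

definition vadd :: "(nat \<Rightarrow> real) \<Rightarrow> (nat \<Rightarrow> real) \<Rightarrow> (nat \<Rightarrow> real)" where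
  "vadd x y = (\<lambda>i. x i + y i)"

definition vsub :: "(nat \<Rightarrow> real) \<Rightarrow> (nat \<Rightarrow> real) \<Rightarrow> (nat \<Rightarrow> real)" where
  "vsub x y = (\<lambda>i. x i - y i)"

definition vconvex :: "(nat \<Rightarrow> real) set \<Rightarrow> bool" where
  "vconvex C \<longleftrightarrow> (\<forall>x\<in>C. \<forall>y\<in>C. \<forall>t::real. 0 \<le> t \<and> t \<le> 1 \<longrightarrow>
      vadd (vscale (1 - t) x) (vscale t y) \<in> C)"

definition centrally_symmetric :: "(nat \<Rightarrow> real) set \<Rightarrow> bool" where
  "centrally_symmetric C \<longleftrightarrow> (\<forall>x\<in>C. vscale (-1) x \<in> C)"

definition gauge :: "(nat \<Rightarrow> real) set \<Rightarrow> (nat \<Rightarrow> real) \<Rightarrow> real" where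
  "gauge C x = Inf {t. 0 \<le> t \<and> x \<in> vscale t ` C}"

definition polar :: "nat \<Rightarrow> (nat \<Rightarrow> real) set \<Rightarrow> (nat \<Rightarrow> real) set" where
  "polar m C = {d \<in> vec m. \<forall>x\<in>C. ip m x d \<le> 1}"

definition modulus_convexity :: "nat \<Rightarrow> (nat \<Rightarrow> real) set \<Rightarrow> real \<Rightarrow> real" where
  "modulus_convexity m C \<epsilon> = Inf {1 - gauge C (vscale (1/2) (vadd x y)) | x y.
      x \<in> vec m \<and> y \<in> vec m \<and> gauge C x = 1 \<and> gauge C y = 1 \<and> gauge C (vsub x y) \<ge> \<epsilon>}"

text \<open>Valued in ennreal,
  so that the supremum and the integral are always meaningful.\<close>
definition rademacher ::
  "nat \<Rightarrow> (nat \<Rightarrow> real) measure \<Rightarrow> ((nat \<Rightarrow> real) \<Rightarrow> real) set \<Rightarrow> ennreal" where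
  "rademacher n \<mu> F = (\<integral>\<^sup>+ xs. (\<Sum>\<sigma>\<in>PiE {..<n} (\<lambda>_. {-1, 1::real}).
        (SUP f\<in>F. ennreal \<bar>(1 / real n) * (\<Sum>i<n. f (xs i) * \<sigma> i)\<bar>)) / 2 ^ n
      \<partial>(PiM {..<n} (\<lambda>_. \<mu>)))"

end

theory Submission
  imports Defs
begin

lemma vec_zero[simp]: "(\<lambda>_. 0) \<in> vec m" by (simp add: vec_def)

lemma interior_box:
  assumes "C \<subseteq> vec m" "(top_of_set (vec m)) interior_of C \<noteq> {}"
  shows "\<exists>c\<in>C. \<exists>\<delta>>0. \<forall>y\<in>vec m. (\<forall>j<m. \<bar>y j - c j\<bar> < \<delta>) \<longrightarrow> y \<in> C"
proof -
  obtain c where "c \<in> (top_of_set (vec m)) interior_of C" using assms by blast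
  then obtain U where U: "openin (top_of_set (vec m)) U" "c \<in> U" "U \<subseteq> C"
    unfolding interior_of_def by blast
  then obtain V where V: "open V" "U = vec m \<inter> V"
    by (auto simp: openin_open)
  have cV: "c \<in> V" and cm: "c \<in> vec m" using U V by auto
  obtain e where e: "e > 0" "ball c e \<subseteq> V" using V(1) cV open_contains_ball by blast
  obtain N where N: "(1/2::real)^N < e/2"
    using real_arch_pow_inv[of "e/2" "1/2"] e by auto
  have "\<forall>y\<in>vec m. (\<forall>j<m. \<bar>y j - c j\<bar> < e/4) \<longrightarrow> y \<in> C"
  proof (intro ballI impI)
    fix y assume y: "y \<in> vec m" "\<forall>j<m. \<bar>y j - c j\<bar> < e/4"
    have all: "dist (y j) (c j) < e/4" for j
    proof (cases "j < m")
      case True then show ?thesis using y by (simp add: dist_real_def)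
    next
      case False then show ?thesis using y cm e by (simp add: vec_def dist_real_def)
    qed
    have fin: "finite {dist (c (from_nat n)) (y (from_nat n)) |n. n \<le> N}" by simp
    have "Max {dist (c (from_nat n)) (y (from_nat n)) |n. n \<le> N} < e/4"
      using fin all by (subst Max_less_iff) (auto simp: dist_commute)
    then have "dist c y < e"
      using dist_fun_le_dist_first_terms[of c y N] N by linarith
    then have "y \<in> V" using e by auto
    then show "y \<in> C" using y V U by auto
  qed
  then show ?thesis using U e by (intro bexI[of _ c]) (auto intro: exI[of _ "e/4"])
qed


lemma vscale_vec[simp]: "x \<in> vec m \<Longrightarrow> vscale t x \<in> vec m" by (simp add: vec_def vscale_def)
lemma vadd_vec[simp]: "x \<in> vec m \<Longrightarrow> y \<in> vec m \<Longrightarrow> vadd x y \<in> vec m" by (simp add: vec_def vadd_def)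
lemma vsub_vec[simp]: "x \<in> vec m \<Longrightarrow> y \<in> vec m \<Longrightarrow> vsub x y \<in> vec m" by (simp add: vec_def vsub_def)
lemma vscale_vscale[simp]: "vscale a (vscale b x) = vscale (a*b) x" by (simp add: vscale_def fun_eq_iff)
lemma vscale_1[simp]: "vscale 1 x = x" by (simp add: vscale_def)

locale cbody =
  fixes m :: nat and C :: "(nat \<Rightarrow> real) set"
  assumes sub: "C \<subseteq> vec m" and cpt: "compact C" and cvx: "vconvex C"
    and csym: "centrally_symmetric C"
    and box: "\<exists>c\<in>C. \<exists>\<delta>>0. \<forall>y\<in>vec m. (\<forall>j<m. \<bar>y j - c j\<bar> < \<delta>) \<longrightarrow> y \<in> C"
begin

lemma neg_in: "x \<in> C \<Longrightarrow> vscale (-1) x \<in> C" using csym by (auto simp: centrally_symmetric_def)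

lemma mid_in: "x \<in> C \<Longrightarrow> y \<in> C \<Longrightarrow> 0 \<le> t \<Longrightarrow> t \<le> 1 \<Longrightarrow> vadd (vscale (1 - t) x) (vscale t y) \<in> C"
  using cvx by (auto simp: vconvex_def)

lemma zero_in: "(\<lambda>_. 0) \<in> C"
proof -
  obtain c where c: "c \<in> C" using box by blast
  have "vadd (vscale (1 - 1/2) c) (vscale (1/2) (vscale (-1) c)) \<in> C"
    using mid_in[OF c neg_in[OF c], of "1/2"] by simp
  moreover have "vadd (vscale (1 - 1/2) c) (vscale (1/2) (vscale (-1) c)) = (\<lambda>_. 0)"
    by (simp add: vadd_def vscale_def fun_eq_iff)
  ultimately show ?thesis by simp
qed

lemma scale_in: "x \<in> C \<Longrightarrow> 0 \<le> t \<Longrightarrow> t \<le> 1 \<Longrightarrow> vscale t x \<in> C"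
proof -
  assume a: "x \<in> C" "0 \<le> t" "t \<le> 1"
  have "vadd (vscale (1 - t) (\<lambda>_. 0)) (vscale t x) \<in> C" using mid_in[OF zero_in a] .
  moreover have "vadd (vscale (1 - t) (\<lambda>_. 0)) (vscale t x) = vscale t x"
    by (simp add: vadd_def vscale_def fun_eq_iff)
  ultimately show ?thesis by simp
qed

lemma small_box: "\<exists>\<delta>>0. \<forall>y\<in>vec m. (\<forall>j<m. \<bar>y j\<bar> < \<delta>) \<longrightarrow> y \<in> C"
proof -
  obtain c \<delta> where c: "c \<in> C" "\<delta> > 0" and H: "\<forall>y\<in>vec m. (\<forall>j<m. \<bar>y j - c j\<bar> < \<delta>) \<longrightarrow> y \<in> C"
    using box by blast
  have cm: "c \<in> vec m" using c sub by auto
  have "\<forall>y\<in>vec m. (\<forall>j<m. \<bar>y j\<bar> < \<delta>) \<longrightarrow> y \<in> C"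
  proof (intro ballI impI)
    fix y assume y: "y \<in> vec m" "\<forall>j<m. \<bar>y j\<bar> < \<delta>"
    have am: "vadd c y \<in> vec m" "vsub c y \<in> vec m" using y cm by auto
    have a: "vadd c y \<in> C" using H[rule_format, OF am(1)] y by (auto simp: vadd_def)
    have b: "vsub c y \<in> C" using H[rule_format, OF am(2)] y by (auto simp: vsub_def)
    have "vadd (vscale (1 - 1/2) (vadd c y)) (vscale (1/2) (vscale (-1) (vsub c y))) \<in> C"
      using mid_in[OF a neg_in[OF b], of "1/2"] by simp
    moreover have "vadd (vscale (1 - 1/2) (vadd c y)) (vscale (1/2) (vscale (-1) (vsub c y))) = y"
      by (simp add: vadd_def vsub_def vscale_def fun_eq_iff field_simps)
    ultimately show "y \<in> C" by simp
  qed
  then show ?thesis using c by blast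
qed

lemma absorb: "x \<in> vec m \<Longrightarrow> \<exists>t>0. vscale (1/t) x \<in> C"
proof -
  assume x: "x \<in> vec m"
  obtain \<delta> where d: "\<delta> > 0" "\<forall>y\<in>vec m. (\<forall>j<m. \<bar>y j\<bar> < \<delta>) \<longrightarrow> y \<in> C" using small_box by blast
  define M where "M = (\<Sum>j<m. \<bar>x j\<bar>)"
  have M0: "M \<ge> 0" unfolding M_def by (simp add: sum_nonneg)
  define t where "t = 2 * (M + 1) / \<delta>"
  have t: "t > 0" using M0 d unfolding t_def by simp
  have "\<bar>vscale (1/t) x j\<bar> < \<delta>" if "j < m" for j
  proof -
    have xj: "\<bar>x j\<bar> \<le> M" unfolding M_def using that
      by (intro member_le_sum) auto
    have "\<bar>vscale (1/t) x j\<bar> = \<bar>x j\<bar> * \<delta> / (2 * (M + 1))"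
      using t d M0 by (simp add: vscale_def t_def abs_mult field_simps)
    also have "\<dots> \<le> M * \<delta> / (2 * (M + 1))"
      using xj d M0 by (intro divide_right_mono mult_right_mono) auto
    also have "\<dots> < \<delta>"
    proof -
      have "M*\<delta> < \<delta>*(2*(M+1))" using mult_nonneg_nonneg[OF M0, of \<delta>] d by (simp add: algebra_simps)
      then show ?thesis using M0 by (simp add: pos_divide_less_eq)
    qed
    finally show ?thesis .
  qed
  then have "vscale (1/t) x \<in> C" using d x by auto
  then show ?thesis using t by blast
qed

lemma closedC: "closed C" using cpt compact_imp_closed by blast

lemma ray_closed: "closed {r::real. vscale r x \<in> C}"
proof -
  have "continuous_on UNIV (\<lambda>r::real. vscale r x)"
    unfolding vscale_def by (intro continuous_on_coordinatewise_then_product continuous_intros)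
  then show ?thesis using closedC
    by (metis (no_types) closed_vimage vimage_def)
qed

definition "g = gauge C"

lemma T_nonempty: "x \<in> vec m \<Longrightarrow> \<exists>t. 0 \<le> t \<and> x \<in> vscale t ` C"
proof -
  assume "x \<in> vec m"
  then obtain t where t: "t > 0" "vscale (1/t) x \<in> C" using absorb by blast
  then have "x \<in> vscale t ` C" by (intro image_eqI[of _ _ "vscale (1/t) x"]) (auto simp: fun_eq_iff vscale_def)
  then show ?thesis using t by (intro exI[of _ t]) auto
qed

lemma g_nonneg: "x \<in> vec m \<Longrightarrow> 0 \<le> g x"
  unfolding g_def gauge_def using T_nonempty by (intro cInf_greatest) auto

lemma g_le_iff: assumes x: "x \<in> vec m" and s: "s > 0" shows "g x \<le> s \<longleftrightarrow> vscale (1/s) x \<in> C"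
proof
  assume "vscale (1/s) x \<in> C"
  then have "x \<in> vscale s ` C" using s by (intro image_eqI[of _ _ "vscale (1/s) x"]) (auto simp: fun_eq_iff vscale_def)
  then have "s \<in> {t. 0 \<le> t \<and> x \<in> vscale t ` C}" using s by auto
  then show "g x \<le> s" unfolding g_def gauge_def
    by (intro cInf_lower) (auto intro: bdd_belowI[of _ 0])
next
  assume gs: "g x \<le> s"
  have inr: "vscale r x \<in> C" if r: "0 < r" "r < 1/s" for r
  proof -
    have "s < 1/r" using r s by (simp add: field_simps)
    then have "Inf {t. 0 \<le> t \<and> x \<in> vscale t ` C} < 1/r"
      using gs unfolding g_def gauge_def by linarith
    then obtain t' where t': "0 \<le> t'" "x \<in> vscale t' ` C" "t' < 1/r"
      using T_nonempty[OF x] by (subst (asm) cInf_less_iff) auto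
    then obtain c where c: "c \<in> C" "x = vscale t' c" by auto
    have "vscale r x = vscale (r*t') c" using c by simp
    moreover have "r * t' \<le> 1" using t' r by (simp add: field_simps)
    ultimately show ?thesis using scale_in[OF c(1)] t' r by simp
  qed
  have "{0<..<1/s} \<subseteq> {r. vscale r x \<in> C}" using inr by auto
  then have "closure {0<..<1/s} \<subseteq> {r. vscale r x \<in> C}"
    using ray_closed closure_minimal by blast
  then have "{0..1/s} \<subseteq> {r. vscale r x \<in> C}" using s by (simp add: closure_greaterThanLessThan)
  moreover have "1/s \<in> {0..1/s}" using s by simp
  ultimately show "vscale (1/s) x \<in> C" by blast
qed

end

lemma ip_add1: "ip m (\<lambda>j. u j + v j) w = ip m u w + ip m v w"
  by (simp add: ip_def sum.distrib algebra_simps)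
lemma ip_diff1: "ip m (\<lambda>j. u j - v j) w = ip m u w - ip m v w"
  by (simp add: ip_def sum_subtractf algebra_simps)
lemma ip_neg1: "ip m (\<lambda>j. - u j) w = - ip m u w"
  by (simp add: ip_def sum_negf)
lemma ip_scale2: "ip m u (vscale t w) = t * ip m u w"
  by (simp add: ip_def vscale_def sum_distrib_left algebra_simps)
lemma ip_vadd2: "ip m u (vadd x y) = ip m u x + ip m u y"
  by (simp add: ip_def vadd_def sum.distrib algebra_simps)
lemma ip_vsub2: "ip m u (vsub x y) = ip m u x - ip m u y"
  by (simp add: ip_def vsub_def sum_subtractf algebra_simps)
lemma ip_zero2: "ip m u (\<lambda>_. 0) = 0" by (simp add: ip_def)
lemma ip_commute: "ip m u w = ip m w u" by (simp add: ip_def mult.commute)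
lemma coord_cont: "continuous_on S (\<lambda>w::nat\<Rightarrow>real. w j)"
  by (rule continuous_on_subset[OF continuous_on_product_coordinates]) simp
lemma ip_cont: "continuous_on S (\<lambda>w. ip m u w)"
  unfolding ip_def by (intro continuous_on_sum continuous_on_mult_left coord_cont)

context cbody begin

lemma g_le1_iff: "x \<in> vec m \<Longrightarrow> g x \<le> 1 \<longleftrightarrow> x \<in> C"
  using g_le_iff[of x 1] by simp

lemma g_scale: assumes x: "x \<in> vec m" and t: "t > 0" shows "g (vscale t x) = t * g x"
proof -
  have tx: "vscale t x \<in> vec m" using x by simp
  have iff: "g (vscale t x) \<le> s \<longleftrightarrow> t * g x \<le> s" if s: "s > 0" for s
  proof -
    have "g (vscale t x) \<le> s \<longleftrightarrow> vscale (1/s) (vscale t x) \<in> C" using g_le_iff[OF tx s] .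
    also have "\<dots> \<longleftrightarrow> vscale (1/(s/t)) x \<in> C" by simp
    also have "\<dots> \<longleftrightarrow> g x \<le> s/t" using g_le_iff[OF x, of "s/t"] s t by simp
    also have "\<dots> \<longleftrightarrow> t * g x \<le> s" using t by (simp add: field_simps)
    finally show ?thesis .
  qed
  have a: "g (vscale t x) \<le> t * g x"
    by (rule dense_ge) (use iff g_nonneg[OF x] t in \<open>smt (verit) mult_nonneg_nonneg\<close>)
  have b: "t * g x \<le> g (vscale t x)"
    by (rule dense_ge) (use iff g_nonneg[OF tx] in \<open>smt (verit)\<close>)
  show ?thesis using a b by simp
qed

lemma g_neg: assumes x: "x \<in> vec m" shows "g (vscale (-1) x) = g x"
proof -
  have nx: "vscale (-1) x \<in> vec m" using x by simp
  have iff: "g (vscale (-1) x) \<le> s \<longleftrightarrow> g x \<le> s" if s: "s > 0" for s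
  proof -
    have e: "vscale (1/s) (vscale (-1) x) = vscale (-1) (vscale (1/s) x)" by (simp add: mult.commute)
    have "vscale (1/s) (vscale (-1) x) \<in> C \<longleftrightarrow> vscale (1/s) x \<in> C"
      using neg_in[of "vscale (1/s) x"] neg_in[of "vscale (1/s) (vscale (-1) x)"] by (auto simp: e)
    then show ?thesis using g_le_iff[OF x s] g_le_iff[OF nx s] by simp
  qed
  have a: "g (vscale (-1) x) \<le> g x"
    by (rule dense_ge) (use iff g_nonneg[OF x] in \<open>smt (verit)\<close>)
  have b: "g x \<le> g (vscale (-1) x)"
    by (rule dense_ge) (use iff g_nonneg[OF nx] in \<open>smt (verit)\<close>)
  show ?thesis using a b by simp
qed

lemma g_triangle: assumes x: "x \<in> vec m" and y: "y \<in> vec m" shows "g (vadd x y) \<le> g x + g y"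
proof (rule dense_ge)
  fix s assume s: "g x + g y < s"
  define \<eta> where "\<eta> = (s - g x - g y) / 2"
  define a where "a = g x + \<eta>"
  define b where "b = g y + \<eta>"
  have eta: "\<eta> > 0" using s unfolding \<eta>_def by simp
  have a: "a > 0" and b: "b > 0" using eta g_nonneg[OF x] g_nonneg[OF y] unfolding a_def b_def by auto
  have ab: "a + b = s" unfolding a_def b_def \<eta>_def by simp
  have xa: "vscale (1/a) x \<in> C" using g_le_iff[OF x a] eta unfolding a_def by simp
  have yb: "vscale (1/b) y \<in> C" using g_le_iff[OF y b] eta unfolding b_def by simp
  have "vadd (vscale (1 - b/s) (vscale (1/a) x)) (vscale (b/s) (vscale (1/b) y)) \<in> C"
    using mid_in[OF xa yb, of "b/s"] a b ab by simp
  moreover have "vadd (vscale (1 - b/s) (vscale (1/a) x)) (vscale (b/s) (vscale (1/b) y)) = vscale (1/s) (vadd x y)"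
  proof -
    have e: "1 - b/s = a/s" using ab a b by (simp add: field_simps)
    have "\<forall>j. (a/s) * ((1/a) * x j) + (b/s)*((1/b) * y j) = (1/s) * (x j + y j)"
      using a b by (simp add: field_simps add_divide_distrib)
    then show ?thesis by (simp add: fun_eq_iff vscale_def vadd_def e)
  qed
  ultimately have "vscale (1/s) (vadd x y) \<in> C" by simp
  moreover have "s > 0" using a b ab by simp
  ultimately show "g (vadd x y) \<le> s" using g_le_iff[of "vadd x y" s] x y by simp
qed

lemma g_sub: assumes x: "x \<in> vec m" and y: "y \<in> vec m" shows "g (vsub x y) \<le> g x + g y"
proof -
  have "vsub x y = vadd x (vscale (-1) y)" by (simp add: fun_eq_iff vsub_def vadd_def vscale_def)
  then show ?thesis using g_triangle[of x "vscale (-1) y"] g_neg[OF y] x y by simp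
qed

definition "Ns u = (SUP w\<in>C. ip m u w)"

lemma C_ne: "C \<noteq> {}" using zero_in by blast

lemma img_compact: "compact ((\<lambda>w. ip m u w) ` C)"
  by (intro compact_continuous_image ip_cont cpt)

lemma ip_le_Ns: "w \<in> C \<Longrightarrow> ip m u w \<le> Ns u"
  unfolding Ns_def
  by (intro cSUP_upper bounded_imp_bdd_above compact_imp_bounded img_compact)

lemma Ns_attained: "\<exists>w\<in>C. ip m u w = Ns u"
proof -
  obtain s where s: "s \<in> (\<lambda>w. ip m u w) ` C" "\<forall>t\<in>(\<lambda>w. ip m u w) ` C. t \<le> s"
    using compact_attains_sup[OF img_compact] C_ne by blast
  then obtain w where w: "w \<in> C" "s = ip m u w" by auto
  have "Ns u \<le> s" unfolding Ns_def using s C_ne by (intro cSUP_least) auto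
  then show ?thesis using ip_le_Ns[OF w(1), of u] w by (intro bexI[of _ w]) auto
qed

lemma Ns_nonneg: "0 \<le> Ns u" using ip_le_Ns[OF zero_in, of u] by (simp add: ip_zero2)

lemma abs_ip_le: "w \<in> C \<Longrightarrow> \<bar>ip m u w\<bar> \<le> Ns u"
  using ip_le_Ns[of w u] ip_le_Ns[OF neg_in, of w u] by (simp add: ip_scale2)

lemma Ns_add: "Ns (\<lambda>j. u j + v j) \<le> Ns u + Ns v"
proof -
  obtain w where w: "w \<in> C" "ip m (\<lambda>j. u j + v j) w = Ns (\<lambda>j. u j + v j)" using Ns_attained by blast
  then show ?thesis using ip_le_Ns[OF w(1), of u] ip_le_Ns[OF w(1), of v] by (simp add: ip_add1)
qed

lemma Ns_neg: "Ns (\<lambda>j. - u j) = Ns u"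
proof -
  have a: "Ns (\<lambda>j. - u j) \<le> Ns u" for u
  proof -
    obtain w where w: "w \<in> C" "ip m (\<lambda>j. - u j) w = Ns (\<lambda>j. - u j)" using Ns_attained by blast
    then show ?thesis using ip_le_Ns[OF neg_in[OF w(1)], of u] by (simp add: ip_neg1 ip_scale2)
  qed
  show ?thesis using a[of u] a[of "\<lambda>j. - u j"] by simp
qed

lemma ip_le_Ns_g: assumes z: "z \<in> vec m" shows "ip m u z \<le> Ns u * g z"
proof (cases "g z > 0")
  case True
  then have "vscale (1/g z) z \<in> C" using g_le_iff[OF z True] by simp
  then have "ip m u (vscale (1/g z) z) \<le> Ns u" by (rule ip_le_Ns)
  then show ?thesis using True by (simp add: ip_scale2 field_simps)
next
  case False
  then have g0: "g z = 0" using g_nonneg[OF z] by simp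
  have "s * ip m u z \<le> Ns u" if s: "s > 0" for s
  proof -
    have "vscale (1/(1/s)) z \<in> C" using g_le_iff[OF z, of "1/s"] s g0 by simp
    then show ?thesis using ip_le_Ns[of "vscale s z" u] by (simp add: ip_scale2)
  qed
  then have "ip m u z \<le> 0"
  proof -
    assume H: "\<And>s. s > 0 \<Longrightarrow> s * ip m u z \<le> Ns u"
    show ?thesis
    proof (rule ccontr)
      assume "\<not> ip m u z \<le> 0"
      then have p: "ip m u z > 0" by simp
      have "(Ns u + 1) / ip m u z * ip m u z \<le> Ns u"
        using H[of "(Ns u + 1) / ip m u z"] p Ns_nonneg[of u] by simp
      then show False using p by simp
    qed
  qed
  then show ?thesis using g0 by simp
qed

lemma unit_max: assumes "Ns u > 0" shows "\<exists>w\<in>vec m. g w = 1 \<and> ip m u w = Ns u"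
proof -
  obtain w where w: "w \<in> C" "ip m u w = Ns u" using Ns_attained by blast
  have wm: "w \<in> vec m" using w sub by auto
  have g1: "g w \<le> 1" using g_le1_iff[OF wm] w by simp
  have "Ns u \<le> Ns u * g w" using ip_le_Ns_g[OF wm, of u] w by simp
  then have "g w \<ge> 1" using assms by simp
  then show ?thesis using g1 w wm by auto
qed

end

lemma concave_mid_powr:
  fixes A B r :: real
  assumes "A \<ge> 0" "B \<ge> 0" "0 \<le> r" "r \<le> 1"
  shows "A powr r + B powr r \<le> 2 * ((A + B) / 2) powr r"
proof (cases "A = 0 \<or> B = 0")
  case True
  then show ?thesis
  proof
    assume A0: "A = 0"
    have "B powr r \<le> 2 * (B/2) powr r"
    proof -
      have "(1/2) powr 1 \<le> (1/2::real) powr r" using assms by (intro powr_mono') auto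
      then have "B powr r * (1/2) \<le> B powr r * (1/2) powr r" by (intro mult_left_mono) auto
      then show ?thesis by (simp add: powr_divide algebra_simps)
    qed
    then show ?thesis using A0 assms by (cases "r = 0") auto
  next
    assume B0: "B = 0"
    have "A powr r \<le> 2 * (A/2) powr r"
    proof -
      have "(1/2) powr 1 \<le> (1/2::real) powr r" using assms by (intro powr_mono') auto
      then have "A powr r * (1/2) \<le> A powr r * (1/2) powr r" by (intro mult_left_mono) auto
      then show ?thesis by (simp add: powr_divide algebra_simps)
    qed
    then show ?thesis using B0 assms by (cases "r = 0") auto
  qed
next
  case False
  then have A: "A > 0" and B: "B > 0" using assms by auto
  define M where "M = (A + B) / 2"
  have M: "M > 0" using A B unfolding M_def by simp
  have 1: "A powr r * M powr (1 - r) \<le> r * A + (1 - r) * M"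
    using Youngs_inequality_0[of r "1 - r" A M] assms A M by simp
  have 2: "B powr r * M powr (1 - r) \<le> r * B + (1 - r) * M"
    using Youngs_inequality_0[of r "1 - r" B M] assms B M by simp
  have "(A powr r + B powr r) * M powr (1 - r) \<le> 2 * M"
  proof -
    have e: "r*A + (1-r)*M + (r*B + (1-r)*M) = 2*M" unfolding M_def by (simp add: algebra_simps)
    have "(A powr r + B powr r) * M powr (1 - r) = A powr r * M powr (1 - r) + B powr r * M powr (1 - r)"
      by (simp add: distrib_right)
    then show ?thesis using 1 2 e by linarith
  qed
  also have "2 * M = 2 * M powr r * M powr (1 - r)"
    using M by (simp add: powr_add[symmetric])
  finally have "A powr r + B powr r \<le> 2 * M powr r"
    using M by (simp add: mult_le_cancel_right)
  then show ?thesis unfolding M_def .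
qed

lemma subadd_powr:
  fixes A B r :: real
  assumes "A \<ge> 0" "B \<ge> 0" "0 \<le> r" "r \<le> 1"
  shows "(A + B) powr r \<le> A powr r + B powr r"
proof (cases "A + B = 0")
  case True then show ?thesis using assms by auto
next
  case False
  define S where "S = A + B"
  have S: "S > 0" using False assms unfolding S_def by simp
  have a: "A / S \<le> (A / S) powr r"
    using powr_mono'[of r 1 "A/S"] assms S unfolding S_def by auto
  have b: "B / S \<le> (B / S) powr r"
    using powr_mono'[of r 1 "B/S"] assms S unfolding S_def by auto
  have "A / S + B / S = 1" using S unfolding S_def by (simp add: add_divide_distrib[symmetric])
  then have "1 \<le> (A / S) powr r + (B / S) powr r" using a b by linarith
  then have "S powr r * 1 \<le> S powr r * ((A / S) powr r + (B / S) powr r)" by (intro mult_left_mono) auto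
  also have "\<dots> = A powr r + B powr r" using S assms by (simp add: powr_divide distrib_left)
  finally show ?thesis unfolding S_def by simp
qed

lemma clarkson:
  fixes s t q :: real
  assumes "s \<ge> 0" "t \<ge> 0" "1 \<le> q" "q \<le> 2"
  shows "(s powr q + t powr q) / 2 \<le> ((s + t) / 2) powr q + (\<bar>s - t\<bar> / 2) powr q"
proof -
  define r where "r = q / 2"
  have r: "0 \<le> r" "r \<le> 1" using assms unfolding r_def by auto
  have sq: "x powr q = (x^2) powr r" if "x \<ge> 0" for x :: real
  proof (cases "x = 0")
    case True then show ?thesis using assms unfolding r_def by simp
  next
    case False
    then have "x^2 = x powr 2" using powr_realpow[of x 2] that by simp
    then show ?thesis unfolding r_def by (simp add: powr_powr)
  qed
  have "s powr q + t powr q = (s^2) powr r + (t^2) powr r" using sq assms by simp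
  also have "\<dots> \<le> 2 * ((s^2 + t^2) / 2) powr r" by (rule concave_mid_powr) (use r in auto)
  also have "(s^2 + t^2) / 2 = ((s + t) / 2)^2 + (\<bar>s - t\<bar> / 2)^2"
    by (simp add: power2_eq_square field_simps)
  also have "(((s + t) / 2)^2 + (\<bar>s - t\<bar> / 2)^2) powr r \<le> (((s + t) / 2)^2) powr r + ((\<bar>s - t\<bar> / 2)^2) powr r"
    by (rule subadd_powr) (use r in auto)
  also have "(((s + t) / 2)^2) powr r = ((s + t) / 2) powr q" using sq[of "(s+t)/2"] assms by simp
  also have "((\<bar>s - t\<bar> / 2)^2) powr r = (\<bar>s - t\<bar> / 2) powr q" using sq[of "\<bar>s - t\<bar>/2"] by simp
  finally show ?thesis by simp
qed


lemma young_mod: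
  fixes p q \<alpha> a b \<epsilon> :: real
  assumes pq: "p > 1" "q > 1" "1/p + 1/q = 1" and al: "\<alpha> > 0" and a: "a > 0" and b: "b \<ge> 0" and e: "\<epsilon> \<ge> 0"
  shows "b * \<epsilon> - 2 * a * \<alpha> * \<epsilon> powr p \<le> b powr q * a powr (1 - q) / (q * (2 * \<alpha> * p) powr (q - 1))"
proof -
  define L where "L = (2 * a * \<alpha> * p) powr (1/p)"
  have Z: "2 * a * \<alpha> * p > 0" using pq al a by simp
  have L: "L > 0" unfolding L_def using Z pq al a by simp
  have Lp: "L powr p = 2 * a * \<alpha> * p" unfolding L_def using Z pq by (simp add: powr_powr)
  have qp: "q / p = q - 1" using pq by (simp add: field_simps)
  have Lq: "L powr q = (2 * \<alpha> * p) powr (q - 1) * a powr (q - 1)"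
  proof -
    have "L powr q = (2 * a * \<alpha> * p) powr (q / p)" unfolding L_def using Z by (simp add: powr_powr)
    also have "\<dots> = (2 * \<alpha> * p * a) powr (q - 1)" using qp by (simp add: mult_ac)
    also have "\<dots> = (2 * \<alpha> * p) powr (q - 1) * a powr (q - 1)" by (rule powr_mult)
    finally show ?thesis .
  qed
  have Y: "(L * \<epsilon>) * (b / L) \<le> (L * \<epsilon>) powr p / p + (b / L) powr q / q"
    by (rule Youngs_inequality) (use pq L b e in auto)
  have 1: "(L * \<epsilon>) * (b / L) = b * \<epsilon>" using L by simp
  have 2: "(L * \<epsilon>) powr p / p = 2 * a * \<alpha> * \<epsilon> powr p"
    using L e pq by (simp add: powr_mult Lp)
  have 3: "(b / L) powr q / q = b powr q * a powr (1 - q) / (q * (2 * \<alpha> * p) powr (q - 1))"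
  proof -
    have "(b / L) powr q / q = b powr q / (q * ((2 * \<alpha> * p) powr (q - 1) * a powr (q - 1)))"
      by (simp add: powr_divide b L Lq)
    also have "a powr (q - 1) = 1 / a powr (1 - q)"
      using a by (simp add: powr_minus_divide[symmetric])
    finally show ?thesis using a by simp
  qed
  show ?thesis using Y 1 2 3 by linarith
qed

lemma smooth_scalar:
  fixes q a b s t c :: real
  assumes q: "1 < q" "q \<le> 2" and a: "a \<ge> 0" and b: "b \<ge> 0" and s: "s \<ge> 0" and t: "t \<ge> 0"
    and c: "c \<ge> 0"
    and sab: "s \<le> a + b" and tab: "t \<le> a + b" and st: "\<bar>s - t\<bar> \<le> 2 * b"
    and main: "a > 0 \<Longrightarrow> s + t \<le> 2 * a + 2 * c * b powr q * a powr (1 - q)"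
  shows "(s powr q + t powr q) / 2 \<le> a powr q + max 4 ((2 + c) * c + 1) * b powr q"
proof (cases "a = 0 \<or> a \<le> b")
  case True
  then have s2: "s \<le> 2 * b" and t2: "t \<le> 2 * b" using sab tab a b by auto
  have four: "(2::real) powr q \<le> 4"
  proof -
    have "(2::real) powr q \<le> 2 powr 2" using q by (intro powr_mono) auto
    then show ?thesis by (simp add: powr_numeral)
  qed
  have "s powr q \<le> (2 * b) powr q" using s s2 q by (intro powr_mono2) auto
  also have "\<dots> = 2 powr q * b powr q" using b by (simp add: powr_mult)
  also have "\<dots> \<le> 4 * b powr q" using four by (intro mult_right_mono) auto
  finally have S: "s powr q \<le> 4 * b powr q" .
  have "t powr q \<le> (2 * b) powr q" using t t2 q by (intro powr_mono2) auto
  also have "\<dots> = 2 powr q * b powr q" using b by (simp add: powr_mult)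
  also have "\<dots> \<le> 4 * b powr q" using four by (intro mult_right_mono) auto
  finally have T: "t powr q \<le> 4 * b powr q" .
  have "4 * b powr q \<le> max 4 ((2 + c) * c + 1) * b powr q" by (intro mult_right_mono) auto
  moreover have "0 \<le> a powr q" by simp
  moreover have "(s powr q + t powr q)/2 \<le> 4 * b powr q" using S T by (simp add: field_simps)
  ultimately show ?thesis by (metis add_increasing order_trans)
next
  case False
  then have a0: "a > 0" and ba: "b < a" using a by auto
  define \<tau> where "\<tau> = b / a"
  have tau: "0 \<le> \<tau>" "\<tau> \<le> 1" using a0 ba b unfolding \<tau>_def by auto
  have tq: "\<tau> powr q \<le> 1" using tau q by (intro powr_le1) auto
  define x where "x = c * \<tau> powr q"
  have x: "0 \<le> x" "x \<le> c" using tq c unfolding x_def by (auto simp: mult_left_le)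
  have bq: "b powr q = a powr q * \<tau> powr q" unfolding \<tau>_def using a0 b by (simp add: powr_divide)
  have baq: "b powr q * a powr (1 - q) = a * \<tau> powr q"
  proof -
    have "b powr q * a powr (1 - q) = \<tau> powr q * (a powr q * a powr (1 - q))" using bq by simp
    also have "a powr q * a powr (1 - q) = a" using a0 by (simp add: powr_add[symmetric])
    finally show ?thesis by simp
  qed
  define M where "M = (s + t) / 2"
  have M: "0 \<le> M" "M \<le> a * (1 + x)" using main[OF a0] s t baq unfolding M_def x_def by (auto simp: algebra_simps)
  have "M powr q \<le> (a * (1 + x)) powr q" using M q by (intro powr_mono2) auto
  also have "\<dots> = a powr q * (1 + x) powr q" using a0 x by (simp add: powr_mult)
  also have "(1 + x) powr q \<le> (1 + x) powr 2" using x q by (intro powr_mono) auto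
  also have "(1 + x) powr 2 = (1 + x)^2" using x by (simp add: powr_realpow)
  also have "\<dots> \<le> 1 + (2 + c) * x"
  proof -
    have "x * x \<le> c * x" using x by (intro mult_right_mono) auto
    then show ?thesis by (simp add: power2_eq_square algebra_simps)
  qed
  finally have MQ0: "M powr q \<le> a powr q * (1 + (2 + c) * x)" using a0 by (simp add: mult_left_mono)
  have "a powr q * (1 + (2 + c) * x) = a powr q + (2 + c) * c * b powr q"
    unfolding x_def bq by (simp add: algebra_simps)
  then have MQ: "M powr q \<le> a powr q + (2 + c) * c * b powr q" using MQ0 by simp
  have DQ: "(\<bar>s - t\<bar> / 2) powr q \<le> b powr q" using st q by (intro powr_mono2) auto
  have "(s powr q + t powr q) / 2 \<le> M powr q + (\<bar>s - t\<bar> / 2) powr q"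
    unfolding M_def by (rule clarkson) (use s t q in auto)
  also have "\<dots> \<le> a powr q + ((2 + c) * c + 1) * b powr q" using MQ DQ by (simp add: algebra_simps)
  also have "\<dots> \<le> a powr q + max 4 ((2 + c) * c + 1) * b powr q" by (intro add_left_mono mult_right_mono) auto
  finally show ?thesis .
qed


context cbody begin

lemma g_mid: "x \<in> vec m \<Longrightarrow> y \<in> vec m \<Longrightarrow> g (vadd x y) = 2 * g (vscale (1/2) (vadd x y))"
  using g_scale[of "vadd x y" "1/2"] by simp

lemma mid_le1: "x \<in> vec m \<Longrightarrow> y \<in> vec m \<Longrightarrow> g x = 1 \<Longrightarrow> g y = 1 \<Longrightarrow> g (vscale (1/2) (vadd x y)) \<le> 1"
  using g_mid[of x y] g_triangle[of x y] by simp

lemma modulus_step: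
  assumes x: "x \<in> vec m" and y: "y \<in> vec m" and gx: "g x = 1" and gy: "g y = 1"
  shows "modulus_convexity m C (g (vsub x y)) \<le> 1 - g (vscale (1/2) (vadd x y))"
proof -
  define e where "e = g (vsub x y)"
  let ?S = "{1 - gauge C (vscale (1/2) (vadd x' y')) | x' y'.
      x' \<in> vec m \<and> y' \<in> vec m \<and> gauge C x' = 1 \<and> gauge C y' = 1 \<and> gauge C (vsub x' y') \<ge> e}"
  have mem: "1 - g (vscale (1/2) (vadd x y)) \<in> ?S" using x y gx gy unfolding g_def e_def by blast
  have bdd: "bdd_below ?S"
  proof (rule bdd_belowI[of _ 0])
    fix z assume "z \<in> ?S"
    then obtain x' y' where "z = 1 - g (vscale (1/2) (vadd x' y'))" "x' \<in> vec m" "y' \<in> vec m" "g x' = 1" "g y' = 1"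
      unfolding g_def by blast
    then show "0 \<le> z" using mid_le1 by simp
  qed
  show ?thesis unfolding modulus_convexity_def using cInf_lower[OF mem bdd] unfolding e_def .
qed

lemma unit_ge: assumes a: "Ns u > 0" shows "\<exists>x\<in>vec m. g x = 1 \<and> Ns w \<le> ip m w x"
proof (cases "Ns w > 0")
  case True
  obtain x where "x \<in> vec m" "g x = 1" "ip m w x = Ns w" using unit_max[OF True] by blast
  then show ?thesis by (intro bexI[of _ x]) auto
next
  case False
  then have w0: "Ns w = 0" using Ns_nonneg[of w] by simp
  obtain e where e: "e \<in> vec m" "g e = 1" using unit_max[OF a] by blast
  show ?thesis
  proof (cases "ip m w e \<ge> 0")
    case True then show ?thesis using e w0 by (intro bexI[of _ e]) auto
  next
    case False
    then have "ip m w (vscale (-1) e) \<ge> 0" by (simp add: ip_scale2)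
    moreover have "g (vscale (-1) e) = 1" using g_neg[OF e(1)] e by simp
    ultimately show ?thesis using e w0 by (intro bexI[of _ "vscale (-1) e"]) auto
  qed
qed

lemma Ns_smooth:
  fixes p q \<alpha> :: real
  assumes pq: "p \<ge> 2" "1 < q" "q \<le> 2" "1 / p + 1 / q = 1" and al: "\<alpha> > 0"
    and modc: "\<forall>\<epsilon>. 0 \<le> \<epsilon> \<and> \<epsilon> \<le> 2 \<longrightarrow> modulus_convexity m C \<epsilon> \<ge> \<alpha> * \<epsilon> powr p"
  shows "(Ns (\<lambda>j. u j + v j) powr q + Ns (\<lambda>j. u j - v j) powr q) / 2
     \<le> Ns u powr q + max 4 ((2 + 1 / (2 * (q * (2 * \<alpha> * p) powr (q - 1)))) * (1 / (2 * (q * (2 * \<alpha> * p) powr (q - 1)))) + 1) * Ns v powr q"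
proof -
  define c where "c = 1 / (2 * (q * (2 * \<alpha> * p) powr (q - 1)))"
  have c: "c \<ge> 0" unfolding c_def using pq by simp
  define a where "a = Ns u"
  define b where "b = Ns v"
  define s where "s = Ns (\<lambda>j. u j + v j)"
  define t where "t = Ns (\<lambda>j. u j - v j)"
  have a0: "a \<ge> 0" "b \<ge> 0" "s \<ge> 0" "t \<ge> 0" unfolding a_def b_def s_def t_def by (auto intro: Ns_nonneg)
  have sab: "s \<le> a + b" unfolding s_def a_def b_def by (rule Ns_add)
  have tab: "t \<le> a + b"
  proof -
    have "t = Ns (\<lambda>j. u j + (- v j))" unfolding t_def by (rule arg_cong[where f=Ns]) auto
    also have "\<dots> \<le> a + Ns (\<lambda>j. - v j)" unfolding a_def by (rule Ns_add)
    finally show ?thesis unfolding b_def Ns_neg .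
  qed
  have st: "\<bar>s - t\<bar> \<le> 2 * b"
  proof -
    have "s = Ns (\<lambda>j. (u j - v j) + (v j + v j))" unfolding s_def by (rule arg_cong[where f=Ns]) auto
    also have "\<dots> \<le> t + Ns (\<lambda>j. v j + v j)" unfolding t_def by (rule Ns_add)
    also have "Ns (\<lambda>j. v j + v j) \<le> 2 * b" using Ns_add[of v v] unfolding b_def by simp
    finally have 1: "s \<le> t + 2 * b" by simp
    have "t = Ns (\<lambda>j. (u j + v j) + (- v j + - v j))" unfolding t_def by (rule arg_cong[where f=Ns]) auto
    also have "\<dots> \<le> s + Ns (\<lambda>j. - v j + - v j)" unfolding s_def by (rule Ns_add)
    also have "Ns (\<lambda>j. - v j + - v j) \<le> 2 * b" using Ns_add[of "\<lambda>j. - v j" "\<lambda>j. - v j"] Ns_neg[of v] unfolding b_def by simp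
    finally have 2: "t \<le> s + 2 * b" by simp
    show ?thesis using 1 2 by linarith
  qed
  have main: "s + t \<le> 2 * a + 2 * c * b powr q * a powr (1 - q)" if apos: "a > 0"
  proof -
    obtain x where x: "x \<in> vec m" "g x = 1" "s \<le> ip m (\<lambda>j. u j + v j) x"
      using unit_ge[of u "\<lambda>j. u j + v j"] apos unfolding a_def s_def by blast
    obtain y where y: "y \<in> vec m" "g y = 1" "t \<le> ip m (\<lambda>j. u j - v j) y"
      using unit_ge[of u "\<lambda>j. u j - v j"] apos unfolding a_def t_def by blast
    define \<epsilon> where "\<epsilon> = g (vsub x y)"
    have e02: "0 \<le> \<epsilon>" "\<epsilon> \<le> 2" using g_nonneg[of "vsub x y"] g_sub[OF x(1) y(1)] x y unfolding \<epsilon>_def by auto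
    have md: "\<alpha> * \<epsilon> powr p \<le> 1 - g (vscale (1/2) (vadd x y))"
    proof -
      have "modulus_convexity m C \<epsilon> \<le> 1 - g (vscale (1/2) (vadd x y))"
        using modulus_step[OF x(1) y(1) x(2) y(2)] unfolding \<epsilon>_def .
      then show ?thesis using modc[rule_format, OF conjI[OF e02]] by linarith
    qed
    have "s + t \<le> ip m u (vadd x y) + ip m v (vsub x y)"
      using x(3) y(3) by (simp add: ip_add1 ip_diff1 ip_vadd2 ip_vsub2)
    also have "\<dots> \<le> a * g (vadd x y) + b * \<epsilon>"
    proof -
      have "ip m u (vadd x y) \<le> a * g (vadd x y)" using ip_le_Ns_g[of "vadd x y" u] x unfolding a_def by (simp add: y(1))
      moreover have "ip m v (vsub x y) \<le> b * \<epsilon>" using ip_le_Ns_g[of "vsub x y" v] x unfolding b_def \<epsilon>_def by (simp add: y(1))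
      ultimately show ?thesis by linarith
    qed
    also have "a * g (vadd x y) \<le> a * (2 * (1 - \<alpha> * \<epsilon> powr p))"
      using g_mid[OF x(1) y(1)] md a0 by (intro mult_left_mono) auto
    also have "a * (2 * (1 - \<alpha> * \<epsilon> powr p)) + b * \<epsilon> = 2 * a + (b * \<epsilon> - 2 * a * \<alpha> * \<epsilon> powr p)"
      by (simp add: algebra_simps)
    also have "b * \<epsilon> - 2 * a * \<alpha> * \<epsilon> powr p \<le> b powr q * a powr (1 - q) / (q * (2 * \<alpha> * p) powr (q - 1))"
      by (rule young_mod) (use pq al apos a0 e02 in linarith)+
    also have "\<dots> = 2 * c * b powr q * a powr (1 - q)" unfolding c_def by simp
    finally show ?thesis by simp
  qed
  have "(s powr q + t powr q) / 2 \<le> a powr q + max 4 ((2 + c) * c + 1) * b powr q"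
    by (rule smooth_scalar) (use pq a0 c sab tab st main in simp_all)
  then show ?thesis unfolding a_def b_def s_def t_def c_def .
qed

end

lemma sum_PiE_Suc:
  fixes f :: "(nat \<Rightarrow> real) \<Rightarrow> real"
  shows "(\<Sum>\<sigma>\<in>PiE {..<Suc n} (\<lambda>_. T). f \<sigma>) = (\<Sum>\<sigma>\<in>PiE {..<n} (\<lambda>_. T). \<Sum>y\<in>T. f (\<sigma>(n := y)))"
proof -
  have "PiE {..<Suc n} (\<lambda>_. T) = (\<lambda>(y, g). g(n := y)) ` (T \<times> PiE {..<n} (\<lambda>_. T))"
    using PiE_insert_eq[of n "{..<n}" "\<lambda>_. T"] by (simp add: lessThan_Suc)
  moreover have "inj_on (\<lambda>(y, g). g(n := y)) (T \<times> PiE {..<n} (\<lambda>_. T))"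
    using inj_combinator[of n "{..<n}" "\<lambda>_. T"] by simp
  ultimately have "(\<Sum>\<sigma>\<in>PiE {..<Suc n} (\<lambda>_. T). f \<sigma>) = (\<Sum>(y, g)\<in>T \<times> PiE {..<n} (\<lambda>_. T). f (g(n := y)))"
    by (simp add: sum.reindex case_prod_unfold)
  also have "\<dots> = (\<Sum>y\<in>T. \<Sum>g\<in>PiE {..<n} (\<lambda>_. T). f (g(n := y)))"
    by (rule sum.cartesian_product[symmetric])
  also have "\<dots> = (\<Sum>\<sigma>\<in>PiE {..<n} (\<lambda>_. T). \<Sum>y\<in>T. f (\<sigma>(n := y)))"
    by (rule sum.swap)
  finally show ?thesis .
qed

lemma type_ineq:
  fixes F :: "(nat \<Rightarrow> real) \<Rightarrow> real" and xs :: "nat \<Rightarrow> nat \<Rightarrow> real"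
  assumes sm: "\<And>u v. F (\<lambda>j. u j + v j) + F (\<lambda>j. u j - v j) \<le> 2 * F u + 2 * K * F v"
  shows "(\<Sum>\<sigma>\<in>PiE {..<n} (\<lambda>_. {-1, 1::real}). F (\<lambda>j. \<Sum>i<n. \<sigma> i * xs i j))
     \<le> 2 ^ n * (F (\<lambda>_. 0) + K * (\<Sum>i<n. F (xs i)))"
proof (induction n)
  case 0
  then show ?case by simp
next
  case (Suc n)
  let ?P = "PiE {..<n} (\<lambda>_. {-1, 1::real})"
  let ?u = "\<lambda>\<sigma> j. \<Sum>i<n. \<sigma> i * xs i j"
  have cardP: "card ?P = 2 ^ n" by (simp add: card_PiE) (simp add: numeral_2_eq_2)
  have upd: "(\<lambda>j. \<Sum>i<Suc n. (\<sigma>(n := y)) i * xs i j) = (\<lambda>j. ?u \<sigma> j + y * xs n j)" for \<sigma> y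
    by (simp add: fun_eq_iff)
  have inner: "(\<Sum>y\<in>{-1, 1::real}. F (\<lambda>j. ?u \<sigma> j + y * xs n j)) \<le> 2 * F (?u \<sigma>) + 2 * K * F (xs n)" for \<sigma>
  proof -
    have "(\<Sum>y\<in>{-1, 1::real}. F (\<lambda>j. ?u \<sigma> j + y * xs n j)) = F (\<lambda>j. ?u \<sigma> j - xs n j) + F (\<lambda>j. ?u \<sigma> j + xs n j)"
      by simp
    then show ?thesis using sm[of "?u \<sigma>" "xs n"] by simp
  qed
  have "(\<Sum>\<sigma>\<in>PiE {..<Suc n} (\<lambda>_. {-1, 1::real}). F (\<lambda>j. \<Sum>i<Suc n. \<sigma> i * xs i j))
      = (\<Sum>\<sigma>\<in>?P. \<Sum>y\<in>{-1, 1::real}. F (\<lambda>j. ?u \<sigma> j + y * xs n j))"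
    by (simp only: sum_PiE_Suc upd)
  also have "\<dots> \<le> (\<Sum>\<sigma>\<in>?P. 2 * F (?u \<sigma>) + 2 * K * F (xs n))"
    by (rule sum_mono) (rule inner)
  also have "\<dots> = 2 * (\<Sum>\<sigma>\<in>?P. F (?u \<sigma>)) + 2 ^ n * (2 * K * F (xs n))"
    by (simp add: sum.distrib sum_distrib_left cardP)
  also have "\<dots> \<le> 2 * (2 ^ n * (F (\<lambda>_. 0) + K * (\<Sum>i<n. F (xs i)))) + 2 ^ n * (2 * K * F (xs n))"
    using Suc.IH by simp
  also have "\<dots> = 2 ^ Suc n * (F (\<lambda>_. 0) + K * (\<Sum>i<Suc n. F (xs i)))"
    by (simp add: algebra_simps)
  finally show ?case .
qed

lemma power_mean:
  fixes f :: "'a \<Rightarrow> real"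
  assumes pq: "p > 1" "q > 1" "1/p + 1/q = 1" and A: "finite A" "A \<noteq> {}" and f: "\<And>i. i \<in> A \<Longrightarrow> f i \<ge> 0"
  shows "(\<Sum>i\<in>A. f i) / card A \<le> ((\<Sum>i\<in>A. f i powr q) / card A) powr (1/q)"
proof -
  define N where "N = real (card A)"
  have N: "N > 0" using A unfolding N_def by (simp add: card_gt_0_iff)
  define Q where "Q = (\<Sum>i\<in>A. f i powr q) / N"
  have Q: "Q \<ge> 0" unfolding Q_def using N by (simp add: sum_nonneg)
  define B where "B = Q powr (1/q)"
  show ?thesis
  proof (cases "B = 0")
    case True
    then have "Q = 0" unfolding B_def using Q by simp
    then have "(\<Sum>i\<in>A. f i powr q) = 0" unfolding Q_def using N by simp
    then have "\<forall>i\<in>A. f i powr q = 0" using A(1) by (subst (asm) sum_nonneg_eq_0_iff) auto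
    then have "\<forall>i\<in>A. f i = 0" by simp
    then show ?thesis by simp
  next
    case False
    then have B: "B > 0" unfolding B_def using Q by simp
    have Bq: "B powr q = Q" unfolding B_def using Q pq by (simp add: powr_powr)
    have y: "f i / B * 1 \<le> (f i / B) powr q / q + 1 powr p / p" if "i \<in> A" for i
      by (rule Youngs_inequality) (use pq f that B in auto)
    have y2: "f i / B \<le> f i powr q / (Q * q) + 1 / p" if "i \<in> A" for i
      using y[OF that] B f[OF that] by (simp add: powr_divide Bq)
    have "(\<Sum>i\<in>A. f i / B) \<le> (\<Sum>i\<in>A. f i powr q / (Q * q) + 1 / p)"
      by (rule sum_mono) (rule y2)
    also have "\<dots> = (\<Sum>i\<in>A. f i powr q) / (Q * q) + N / p"
      by (simp add: sum.distrib sum_divide_distrib N_def)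
    also have "(\<Sum>i\<in>A. f i powr q) = Q * N" unfolding Q_def using N by simp
    also have "Q * N / (Q * q) + N / p = N"
    proof -
      have "B powr q > 0" using B by simp
      then have Qp: "Q > 0" using Bq by simp
      then have "Q * N / (Q * q) = N / q" by simp
      moreover have "N / q + N / p = N * (1/p + 1/q)" by (simp add: algebra_simps)
      ultimately show ?thesis using pq by simp
    qed
    finally have "(\<Sum>i\<in>A. f i) / B \<le> N" by (simp add: sum_divide_distrib)
    then have "(\<Sum>i\<in>A. f i) \<le> N * B" using B by (simp add: divide_le_eq mult.commute)
    then show ?thesis using N unfolding B_def Q_def N_def by (simp add: divide_le_eq mult.commute)
  qed
qed


lemma ip_scale1: "ip m (vscale t d) w = t * ip m d w"
  by (simp add: ip_def vscale_def sum_distrib_left algebra_simps)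

lemma ip_sum_swap: "(\<Sum>i<n. ip m (xs i) w * \<sigma> i) = ip m (\<lambda>j. \<Sum>i<n. \<sigma> i * xs i j) w"
  unfolding ip_def by (simp add: sum_distrib_left sum_distrib_right mult_ac sum.swap[of _ "{..<n}" "{..<m}"])

context cbody begin

lemma Ns_le_polar: assumes x: "x \<in> vec m" shows "Ns x \<le> gauge (polar m C) x"
proof -
  let ?T = "{t. 0 \<le> t \<and> x \<in> vscale t ` polar m C}"
  define t0 where "t0 = Ns x + 1"
  have t0: "t0 > 0" unfolding t0_def using Ns_nonneg[of x] by simp
  have dp: "vscale (1/t0) x \<in> polar m C"
    unfolding polar_def
  proof (intro CollectI conjI ballI)
    show "vscale (1/t0) x \<in> vec m" using x by simp
    fix w assume w: "w \<in> C"
    have "ip m w (vscale (1/t0) x) = ip m x w / t0" by (simp add: ip_scale2 ip_commute)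
    also have "\<dots> \<le> 1" using ip_le_Ns[OF w, of x] t0 unfolding t0_def by simp
    finally show "ip m w (vscale (1/t0) x) \<le> 1" .
  qed
  have "x \<in> vscale t0 ` polar m C"
    using dp t0 by (intro image_eqI[of _ _ "vscale (1/t0) x"]) (auto simp: fun_eq_iff vscale_def)
  then have "t0 \<in> ?T" using t0 by simp
  then have ne: "?T \<noteq> {}" by blast
  have lb: "Ns x \<le> t" if t: "t \<in> ?T" for t
  proof -
    obtain d where d: "d \<in> polar m C" "x = vscale t d" and t0': "0 \<le> t" using t by auto
    show ?thesis unfolding Ns_def
    proof (rule cSUP_least[OF C_ne])
      fix w assume w: "w \<in> C"
      have "ip m w d \<le> 1" using d(1) w unfolding polar_def by auto
      then have "t * ip m w d \<le> t" using t0' by (simp add: mult_left_le)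
      moreover have "ip m x w = t * ip m w d"
        by (simp only: d(2) ip_scale1) (simp add: ip_commute[of m d w])
      ultimately show "ip m x w \<le> t" by simp
    qed
  qed
  show ?thesis unfolding gauge_def by (rule cInf_greatest[OF ne]) (use lb in blast)
qed

lemma W_sub: "{w \<in> vec m. gauge C w \<le> 1} \<subseteq> C"
  using g_le1_iff unfolding g_def by auto

lemma Ns_zero: "Ns (\<lambda>_. 0) = 0"
proof -
  obtain w where "w \<in> C" "ip m (\<lambda>_. 0) w = Ns (\<lambda>_. 0)" using Ns_attained by blast
  then show ?thesis by (simp add: ip_def)
qed

end


context cbody begin

lemma pointwise:
  fixes p q \<alpha> D :: real and xs :: "nat \<Rightarrow> nat \<Rightarrow> real"
  assumes pq: "p \<ge> 2" "1 < q" "q \<le> 2" "1 / p + 1 / q = 1" and al: "\<alpha> > 0"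
    and modc: "\<forall>\<epsilon>. 0 \<le> \<epsilon> \<and> \<epsilon> \<le> 2 \<longrightarrow> modulus_convexity m C \<epsilon> \<ge> \<alpha> * \<epsilon> powr p"
    and K0: "K0 = max 4 ((2 + 1 / (2 * (q * (2 * \<alpha> * p) powr (q - 1)))) * (1 / (2 * (q * (2 * \<alpha> * p) powr (q - 1)))) + 1)"
    and n: "n \<ge> 1" and xsD: "\<And>i. i < n \<Longrightarrow> Ns (xs i) \<le> D"
  shows "(\<Sum>\<sigma>\<in>PiE {..<n} (\<lambda>_. {-1, 1::real}).
        (SUP f\<in>(\<lambda>w x. ip m x w) ` {w \<in> vec m. gauge C w \<le> 1}. ennreal \<bar>(1 / real n) * (\<Sum>i<n. f (xs i) * \<sigma> i)\<bar>)) / 2 ^ n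
      \<le> ennreal (K0 powr (1 / q) * D / real n powr (1 / p))"
proof -
  let ?P = "PiE {..<n} (\<lambda>_. {-1, 1::real})"
  define S where "S = (\<lambda>\<sigma> j. \<Sum>i<n. \<sigma> i * xs i j)"
  have D0: "D \<ge> 0" using xsD[of 0] n Ns_nonneg[of "xs 0"] by simp
  have nr: "real n > 0" using n by simp
  have K0pos: "K0 > 0" unfolding K0 by simp
  have cardP: "card ?P = 2 ^ n" by (simp add: card_PiE) (simp add: numeral_2_eq_2)
  have finP: "finite ?P" by (simp add: finite_PiE)
  have neP: "?P \<noteq> {}" using finP cardP by (metis card.empty power_not_zero zero_neq_numeral)
  have a: "(SUP f\<in>(\<lambda>w x. ip m x w) ` {w \<in> vec m. gauge C w \<le> 1}. ennreal \<bar>(1 / real n) * (\<Sum>i<n. f (xs i) * \<sigma> i)\<bar>)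
      \<le> ennreal (Ns (S \<sigma>) / real n)" for \<sigma>
  proof (rule SUP_least)
    fix f assume "f \<in> (\<lambda>w x. ip m x w) ` {w \<in> vec m. gauge C w \<le> 1}"
    then obtain w where w: "w \<in> C" "f = (\<lambda>x. ip m x w)" using W_sub by blast
    have "\<bar>(1 / real n) * (\<Sum>i<n. f (xs i) * \<sigma> i)\<bar> = \<bar>ip m (S \<sigma>) w\<bar> / real n"
      using w(2) nr by (simp add: ip_sum_swap S_def abs_mult)
    also have "\<dots> \<le> Ns (S \<sigma>) / real n" using abs_ip_le[OF w(1)] nr by (simp add: divide_right_mono)
    finally show "ennreal \<bar>(1 / real n) * (\<Sum>i<n. f (xs i) * \<sigma> i)\<bar> \<le> ennreal (Ns (S \<sigma>) / real n)"
      by (rule ennreal_leI)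
  qed
  have b: "(\<Sum>\<sigma>\<in>?P. (SUP f\<in>(\<lambda>w x. ip m x w) ` {w \<in> vec m. gauge C w \<le> 1}. ennreal \<bar>(1 / real n) * (\<Sum>i<n. f (xs i) * \<sigma> i)\<bar>))
      \<le> ennreal (\<Sum>\<sigma>\<in>?P. Ns (S \<sigma>) / real n)"
  proof -
    have "(\<Sum>\<sigma>\<in>?P. (SUP f\<in>(\<lambda>w x. ip m x w) ` {w \<in> vec m. gauge C w \<le> 1}. ennreal \<bar>(1 / real n) * (\<Sum>i<n. f (xs i) * \<sigma> i)\<bar>))
      \<le> (\<Sum>\<sigma>\<in>?P. ennreal (Ns (S \<sigma>) / real n))" by (rule sum_mono) (rule a)
    also have "\<dots> = ennreal (\<Sum>\<sigma>\<in>?P. Ns (S \<sigma>) / real n)"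
      by (rule sum_ennreal) (use Ns_nonneg nr in simp)
    finally show ?thesis .
  qed
  define R where "R = (\<Sum>\<sigma>\<in>?P. Ns (S \<sigma>) / real n)"
  have R0: "R \<ge> 0" unfolding R_def using Ns_nonneg nr by (simp add: sum_nonneg)
  have two: "(2::ennreal) ^ n = ennreal (2 ^ n)" using ennreal_power[of 2 n] by simp
  have c: "ennreal R / 2 ^ n = ennreal (R / 2 ^ n)"
    unfolding two by (rule divide_ennreal) (use R0 in auto)
  have sm: "Ns (\<lambda>j. u j + v j) powr q + Ns (\<lambda>j. u j - v j) powr q \<le> 2 * Ns u powr q + 2 * K0 * Ns v powr q" for u v
    using Ns_smooth[OF pq al modc, of u v] unfolding K0 by simp
  have T: "(\<Sum>\<sigma>\<in>?P. Ns (S \<sigma>) powr q) \<le> 2 ^ n * (Ns (\<lambda>_. 0) powr q + K0 * (\<Sum>i<n. Ns (xs i) powr q))"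
    unfolding S_def by (rule type_ineq[where F = "\<lambda>u. Ns u powr q"]) (rule sm)
  have xsq: "(\<Sum>i<n. Ns (xs i) powr q) \<le> real n * D powr q"
  proof -
    have "(\<Sum>i<n. Ns (xs i) powr q) \<le> (\<Sum>i<n. D powr q)"
      by (rule sum_mono) (use xsD Ns_nonneg pq in \<open>auto intro: powr_mono2\<close>)
    then show ?thesis by simp
  qed
  have T2: "(\<Sum>\<sigma>\<in>?P. Ns (S \<sigma>) powr q) / 2 ^ n \<le> K0 * (real n * D powr q)"
  proof -
    have "(\<Sum>\<sigma>\<in>?P. Ns (S \<sigma>) powr q) \<le> 2 ^ n * (K0 * (real n * D powr q))"
    proof -
      have 1: "2 ^ n * (K0 * (\<Sum>i<n. Ns (xs i) powr q)) \<le> 2 ^ n * (K0 * (real n * D powr q))"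
        using xsq K0pos by (intro mult_left_mono) auto
      have 2: "(\<Sum>\<sigma>\<in>?P. Ns (S \<sigma>) powr q) \<le> 2 ^ n * (K0 * (\<Sum>i<n. Ns (xs i) powr q))"
        using T pq by (simp add: Ns_zero)
      show ?thesis using order_trans[OF 2 1] .
    qed
    then show ?thesis by (simp add: divide_le_eq mult.commute)
  qed
  have pm: "(\<Sum>\<sigma>\<in>?P. Ns (S \<sigma>)) / 2 ^ n \<le> ((\<Sum>\<sigma>\<in>?P. Ns (S \<sigma>) powr q) / 2 ^ n) powr (1/q)"
    using power_mean[of p q ?P "\<lambda>\<sigma>. Ns (S \<sigma>)"] pq finP neP Ns_nonneg cardP by simp
  also have "\<dots> \<le> (K0 * (real n * D powr q)) powr (1/q)"
  proof -
    have "0 \<le> (\<Sum>\<sigma>\<in>?P. Ns (S \<sigma>) powr q)" by (rule sum_nonneg) simp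
    then have "0 \<le> (\<Sum>\<sigma>\<in>?P. Ns (S \<sigma>) powr q) / 2 ^ n" by simp
    then show ?thesis using T2 pq by (intro powr_mono2) auto
  qed
  also have "\<dots> = K0 powr (1/q) * real n powr (1/q) * D"
    using K0pos D0 pq by (simp add: powr_mult powr_powr)
  finally have avg: "(\<Sum>\<sigma>\<in>?P. Ns (S \<sigma>)) / 2 ^ n \<le> K0 powr (1/q) * real n powr (1/q) * D" .
  have nn: "real n powr (1/q) / real n = 1 / real n powr (1/p)"
  proof -
    have "real n powr (1/q) * real n powr (1/p) = real n" using pq nr by (simp add: powr_add[symmetric] add.commute)
    then show ?thesis using nr by (simp add: field_simps)
  qed
  have "R / 2 ^ n = ((\<Sum>\<sigma>\<in>?P. Ns (S \<sigma>)) / 2 ^ n) / real n"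
    unfolding R_def by (simp add: sum_divide_distrib[symmetric])
  also have "\<dots> \<le> K0 powr (1/q) * real n powr (1/q) * D / real n"
    using divide_right_mono[OF avg, of "real n"] nr by simp
  also have "\<dots> = K0 powr (1 / q) * D / real n powr (1 / p)"
  proof -
    have "K0 powr (1/q) * real n powr (1/q) * D / real n = K0 powr (1/q) * D * (real n powr (1/q) / real n)"
      by simp
    also have "\<dots> = K0 powr (1/q) * D * (1 / real n powr (1/p))" by (simp only: nn)
    finally show ?thesis by simp
  qed
  finally have d: "R / 2 ^ n \<le> K0 powr (1 / q) * D / real n powr (1 / p)" .
  have "(\<Sum>\<sigma>\<in>?P. (SUP f\<in>(\<lambda>w x. ip m x w) ` {w \<in> vec m. gauge C w \<le> 1}. ennreal \<bar>(1 / real n) * (\<Sum>i<n. f (xs i) * \<sigma> i)\<bar>)) / 2 ^ n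
      \<le> ennreal R / 2 ^ n" using b unfolding R_def by (rule divide_right_mono_ennreal)
  also have "\<dots> = ennreal (R / 2 ^ n)" by (rule c)
  also have "\<dots> \<le> ennreal (K0 powr (1 / q) * D / real n powr (1 / p))" using d by (rule ennreal_leI)
  finally show ?thesis .
qed

end

theorem mainTheorem4:
  fixes p q \<alpha> :: real
  assumes "p \<ge> 2" and "1 < q" and "q \<le> 2" and "1 / p + 1 / q = 1" and "\<alpha> > 0"
  shows "\<exists>K > 0. \<forall>(m::nat) (C :: (nat \<Rightarrow> real) set) (X :: (nat \<Rightarrow> real) set) (D::real)
           (n::nat) (\<mu> :: (nat \<Rightarrow> real) measure).
      C \<subseteq> vec m \<and> compact C \<and> vconvex C \<and> centrally_symmetric C
      \<and> (top_of_set (vec m)) interior_of C \<noteq> {}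
      \<and> (\<forall>\<epsilon>. 0 \<le> \<epsilon> \<and> \<epsilon> \<le> 2 \<longrightarrow> modulus_convexity m C \<epsilon> \<ge> \<alpha> * \<epsilon> powr p)
      \<and> X \<subseteq> vec m \<and> bdd_above (gauge (polar m C) ` X) \<and> D = (SUP x\<in>X. gauge (polar m C) x)
      \<and> n \<ge> 1 \<and> prob_space \<mu> \<and> sets \<mu> = sets borel \<and> (AE x in \<mu>. x \<in> X)
      \<longrightarrow> rademacher n \<mu> ((\<lambda>w x. ip m x w) ` {w \<in> vec m. gauge C w \<le> 1})
          \<le> ennreal (K powr (1 / q) * D / real n powr (1 / p))"
proof -
  note pq = assms(1-4) and al = assms(5)
  define K0 where "K0 = max 4 ((2 + 1 / (2 * (q * (2 * \<alpha> * p) powr (q - 1)))) * (1 / (2 * (q * (2 * \<alpha> * p) powr (q - 1)))) + 1)"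
  have K0pos: "K0 > 0" unfolding K0_def by simp
  show ?thesis
  proof (intro exI[of _ K0] conjI allI impI K0pos)
    fix m :: nat and C X :: "(nat \<Rightarrow> real) set" and D :: real and n :: nat and \<mu> :: "(nat \<Rightarrow> real) measure"
    assume H: "C \<subseteq> vec m \<and> compact C \<and> vconvex C \<and> centrally_symmetric C
      \<and> (top_of_set (vec m)) interior_of C \<noteq> {}
      \<and> (\<forall>\<epsilon>. 0 \<le> \<epsilon> \<and> \<epsilon> \<le> 2 \<longrightarrow> modulus_convexity m C \<epsilon> \<ge> \<alpha> * \<epsilon> powr p)
      \<and> X \<subseteq> vec m \<and> bdd_above (gauge (polar m C) ` X) \<and> D = (SUP x\<in>X. gauge (polar m C) x)
      \<and> n \<ge> 1 \<and> prob_space \<mu> \<and> sets \<mu> = sets borel \<and> (AE x in \<mu>. x \<in> X)"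
    have sub: "C \<subseteq> vec m" and cpt: "compact C" and cvx: "vconvex C" and sym: "centrally_symmetric C"
      and int: "(top_of_set (vec m)) interior_of C \<noteq> {}"
      and modc: "\<forall>\<epsilon>. 0 \<le> \<epsilon> \<and> \<epsilon> \<le> 2 \<longrightarrow> modulus_convexity m C \<epsilon> \<ge> \<alpha> * \<epsilon> powr p"
      and Xsub: "X \<subseteq> vec m" and bdd: "bdd_above (gauge (polar m C) ` X)"
      and Ddef: "D = (SUP x\<in>X. gauge (polar m C) x)"
      and n: "n \<ge> 1" and ps: "prob_space \<mu>" and AEX: "AE x in \<mu>. x \<in> X"
      using H by auto
    interpret cbody m C
      by unfold_locales (use sub cpt cvx sym interior_box[OF sub int] in auto)
    have AEi: "AE xs in PiM {..<n} (\<lambda>_. \<mu>). xs i \<in> X" if "i \<in> {..<n}" for i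
      using AE_PiM_component[of "{..<n}" "\<lambda>_. \<mu>" i "\<lambda>x. x \<in> X"] ps AEX that by auto
    have AEall: "AE xs in PiM {..<n} (\<lambda>_. \<mu>). \<forall>i\<in>{..<n}. xs i \<in> X"
      by (intro eventually_ball_finite finite_lessThan ballI AEi)
    let ?B = "ennreal (K0 powr (1 / q) * D / real n powr (1 / p))"
    have pt: "AE xs in PiM {..<n} (\<lambda>_. \<mu>).
        (\<Sum>\<sigma>\<in>PiE {..<n} (\<lambda>_. {-1, 1::real}).
        (SUP f\<in>(\<lambda>w x. ip m x w) ` {w \<in> vec m. gauge C w \<le> 1}. ennreal \<bar>(1 / real n) * (\<Sum>i<n. f (xs i) * \<sigma> i)\<bar>)) / 2 ^ n
        \<le> ?B"
      using AEall
    proof (rule AE_mp, intro AE_I2 impI)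
      fix xs assume xs: "\<forall>i\<in>{..<n}. xs i \<in> X"
      have "Ns (xs i) \<le> D" if i: "i < n" for i
      proof -
        have xi: "xs i \<in> X" using xs i by auto
        have "Ns (xs i) \<le> gauge (polar m C) (xs i)" using Ns_le_polar xi Xsub by auto
        also have "\<dots> \<le> D" unfolding Ddef using xi bdd by (rule cSUP_upper)
        finally show ?thesis .
      qed
      then show "(\<Sum>\<sigma>\<in>PiE {..<n} (\<lambda>_. {-1, 1::real}).
        (SUP f\<in>(\<lambda>w x. ip m x w) ` {w \<in> vec m. gauge C w \<le> 1}. ennreal \<bar>(1 / real n) * (\<Sum>i<n. f (xs i) * \<sigma> i)\<bar>)) / 2 ^ n
        \<le> ?B"
        by (intro pointwise[OF pq al modc K0_def n])
    qed
    have "rademacher n \<mu> ((\<lambda>w x. ip m x w) ` {w \<in> vec m. gauge C w \<le> 1}) \<le> (\<integral>\<^sup>+ xs. ?B \<partial>(PiM {..<n} (\<lambda>_. \<mu>)))"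
      unfolding rademacher_def by (rule nn_integral_mono_AE[OF pt])
    also have "\<dots> = ?B"
    proof -
      have "prob_space (PiM {..<n} (\<lambda>_. \<mu>))" by (rule prob_space_PiM) (use ps in auto)
      then show ?thesis by (simp add: prob_space.emeasure_space_1)
    qed
    finally show "rademacher n \<mu> ((\<lambda>w x. ip m x w) ` {w \<in> vec m. gauge C w \<le> 1}) \<le> ?B" .
  qed
qed


end
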